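(* Let $p,q\in(0,1/2)$. If $K_{pq}$ is a twofold Cantor set, then $\frac{\log p}{\log q}\notin\mathbb Q$.
   Context: For $p,q\in(0,1/2)$ let $S_1(x)=px$, $S_2(x)=qx$, $S_3(x)=px+1-p$, $S_4(x)=qx+1-q$, let $K_{pq}$ be the attractor of $\{S_1,S_2,S_3,S_4\}$ (the unique nonempty compact $K\subset\mathbb R$ with $K=\bigcup_{i=1}^4S_i(K)$), and let $A=S_3(K_{pq})\cup S_4(K_{pq})$. $K_{pq}$ is called a twofold Cantor set if $S_1^m(A)\cap S_2^n(A)=\varnothing$ for all $m,n\in\mathbb N$. *)

theory Defs
  imports "HOL-Analysis.Analysis"
begin

definition S1 :: "real \<Rightarrow> real \<Rightarrow> real" where "S1 p x = p * x"
definition S2 :: "real \<Rightarrow> real \<Rightarrow> real" where "S2 q x = q * x"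
definition S3 :: "real \<Rightarrow> real \<Rightarrow> real" where "S3 p x = p * x + 1 - p"
definition S4 :: "real \<Rightarrow> real \<Rightarrow> real" where "S4 q x = q * x + 1 - q"

definition Kpq :: "real \<Rightarrow> real \<Rightarrow> real set" where
  "Kpq p q = (THE K. K \<noteq> {} \<and> compact K \<and>
      K = S1 p ` K \<union> S2 q ` K \<union> S3 p ` K \<union> S4 q ` K)"

definition Aset :: "real \<Rightarrow> real \<Rightarrow> real set" where
  "Aset p q = S3 p ` Kpq p q \<union> S4 q ` Kpq p q"

definition twofold_cantor :: "real \<Rightarrow> real \<Rightarrow> bool" where
  "twofold_cantor p q \<longleftrightarrow>
     (\<forall>m n :: nat. m \<ge> 1 \<longrightarrow> n \<ge> 1 \<longrightarrow>
        ((S1 p ^^ m) ` Aset p q) \<inter> ((S2 q ^^ n) ` Aset p q) = {})"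

end

theory Submission
  imports Defs
begin

definition FF :: "real \<Rightarrow> real \<Rightarrow> real set \<Rightarrow> real set" where
  "FF p q K = S1 p ` K \<union> S2 q ` K \<union> S3 p ` K \<union> S4 q ` K"

lemma inv_sub01:
  fixes p q :: real
  assumes pq: "0 < p" "p < 1/2" "0 < q" "q < 1/2"
    and K: "K \<noteq> {}" "compact K" "K = FF p q K"
  shows "K \<subseteq> {0..1}"
proof -
  obtain M where M: "M \<in> K" "\<forall>y\<in>K. y \<le> M"
    using compact_attains_sup[OF K(2) K(1)] by blast
  obtain m where m: "m \<in> K" "\<forall>y\<in>K. m \<le> y"
    using compact_attains_inf[OF K(2) K(1)] by blast
  have "M \<le> 1"
  proof (rule ccontr)
    assume h: "\<not> M \<le> 1"
    from M(1) have "M \<in> FF p q K" using K(3) by simp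
    then obtain y where y: "y \<in> K" and
      "M = p*y \<or> M = q*y \<or> M = p*y+1-p \<or> M = q*y+1-q"
      unfolding FF_def S1_def S2_def S3_def S4_def by auto
    moreover have "y \<le> M" using M y by auto
    moreover have "p*y \<le> p*M" "q*y \<le> q*M" using pq \<open>y \<le> M\<close> by auto
    moreover have "p*M - p < M - 1" using mult_strict_right_mono[of p 1 "M-1"] pq h by (simp add: algebra_simps)
    moreover have "q*M - q < M - 1" using mult_strict_right_mono[of q 1 "M-1"] pq h by (simp add: algebra_simps)
    ultimately show False using h pq by linarith
  qed
  moreover have "0 \<le> m"
  proof (rule ccontr)
    assume h: "\<not> 0 \<le> m"
    from m(1) have "m \<in> FF p q K" using K(3) by simp
    then obtain y where y: "y \<in> K" and
      "m = p*y \<or> m = q*y \<or> m = p*y+1-p \<or> m = q*y+1-q"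
      unfolding FF_def S1_def S2_def S3_def S4_def by auto
    moreover have "m \<le> y" using m y by auto
    moreover have "p*m \<le> p*y" "q*m \<le> q*y" using pq \<open>m \<le> y\<close> by auto
    moreover have "m < p*m" using mult_strict_right_mono_neg[of p 1 m] pq h by (simp add: algebra_simps)
    moreover have "m < q*m" using mult_strict_right_mono_neg[of q 1 m] pq h by (simp add: algebra_simps)
    moreover have "m - 1 < p*m - p" using mult_strict_right_mono_neg[of p 1 "m-1"] pq h by (simp add: algebra_simps)
    moreover have "m - 1 < q*m - q" using mult_strict_right_mono_neg[of q 1 "m-1"] pq h by (simp add: algebra_simps)
    ultimately show False using h pq by linarith
  qed
  ultimately show ?thesis using M m by force
qed

lemma approx:
  fixes p q :: real
  assumes pq: "0 < p" "p < 1/2" "0 < q" "q < 1/2"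
    and K: "K \<noteq> {}" "compact K" "K = FF p q K"
    and K': "K' \<noteq> {}" "compact K'" "K' = FF p q K'"
  shows "\<forall>x\<in>K. \<exists>y\<in>K'. \<bar>x - y\<bar> \<le> (1/2)^n"
proof (induction n)
  case 0
  have "K \<subseteq> {0..1}" "K' \<subseteq> {0..1}" using inv_sub01 pq K K' by blast+
  then show ?case using K'(1) by fastforce
next
  case (Suc n)
  show ?case
  proof
    fix x assume "x \<in> K"
    hence "x \<in> FF p q K" using K(3) by simp
    then obtain x' where x': "x' \<in> K" and
      c: "x = S1 p x' \<or> x = S2 q x' \<or> x = S3 p x' \<or> x = S4 q x'"
      unfolding FF_def by auto
    obtain y' where y': "y' \<in> K'" "\<bar>x' - y'\<bar> \<le> (1/2)^n" using Suc x' by blast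
    have mem: "S1 p y' \<in> K'" "S2 q y' \<in> K'" "S3 p y' \<in> K'" "S4 q y' \<in> K'"
      using y'(1) K'(3) unfolding FF_def by blast+
    have b1: "p * \<bar>x' - y'\<bar> \<le> (1/2) * (1/2)^n"
      using y'(2) pq by (intro mult_mono) auto
    have b2: "q * \<bar>x' - y'\<bar> \<le> (1/2) * (1/2)^n"
      using y'(2) pq by (intro mult_mono) auto
    have e1: "\<bar>p*x' - p*y'\<bar> = p * \<bar>x' - y'\<bar>" using pq
      by (simp add: abs_mult right_diff_distrib[symmetric])
    have e2: "\<bar>q*x' - q*y'\<bar> = q * \<bar>x' - y'\<bar>" using pq
      by (simp add: abs_mult right_diff_distrib[symmetric])
    from c show "\<exists>y\<in>K'. \<bar>x - y\<bar> \<le> (1/2)^Suc n"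
    proof (elim disjE)
      assume "x = S1 p x'" thus ?thesis using mem b1 e1 by (intro bexI[of _ "S1 p y'"]) (auto simp: S1_def)
    next
      assume "x = S2 q x'" thus ?thesis using mem b2 e2 by (intro bexI[of _ "S2 q y'"]) (auto simp: S2_def)
    next
      assume "x = S3 p x'" thus ?thesis using mem b1 e1 by (intro bexI[of _ "S3 p y'"]) (auto simp: S3_def)
    next
      assume "x = S4 q x'" thus ?thesis using mem b2 e2 by (intro bexI[of _ "S4 q y'"]) (auto simp: S4_def)
    qed
  qed
qed

lemma sub_uniq:
  fixes p q :: real
  assumes pq: "0 < p" "p < 1/2" "0 < q" "q < 1/2"
    and K: "K \<noteq> {}" "compact K" "K = FF p q K"
    and K': "K' \<noteq> {}" "compact K'" "K' = FF p q K'"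
  shows "K \<subseteq> K'"
proof
  fix x assume x: "x \<in> K"
  have "x \<in> closure K'"
    unfolding closure_approachable
  proof (intro allI impI)
    fix e :: real assume e: "e > 0"
    obtain n where n: "(1/2::real)^n < e"
      using real_arch_pow_inv[OF e, of "1/2"] by auto
    obtain y where "y \<in> K'" "\<bar>x - y\<bar> \<le> (1/2)^n"
      using approx[OF pq K K'] x by blast
    thus "\<exists>y\<in>K'. dist y x < e" using n by (intro bexI[of _ y]) (auto simp: dist_real_def)
  qed
  thus "x \<in> K'" using K'(2) compact_imp_closed closure_closed by blast
qed

inductive_set PP :: "real \<Rightarrow> real \<Rightarrow> real set" for p q where
  z: "0 \<in> PP p q"
| a: "x \<in> PP p q \<Longrightarrow> S1 p x \<in> PP p q"
| b: "x \<in> PP p q \<Longrightarrow> S2 q x \<in> PP p q"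
| c: "x \<in> PP p q \<Longrightarrow> S3 p x \<in> PP p q"
| d: "x \<in> PP p q \<Longrightarrow> S4 q x \<in> PP p q"

lemma PP_01:
  fixes p q :: real
  assumes pq: "0 < p" "p < 1/2" "0 < q" "q < 1/2"
  shows "x \<in> PP p q \<Longrightarrow> x \<in> {0..1}"
proof (induction rule: PP.induct)
  case z thus ?case by simp
next
  case (a x) thus ?case using pq by (auto simp: S1_def intro: mult_le_one)
next
  case (b x) thus ?case using pq by (auto simp: S2_def intro: mult_le_one)
next
  case (c x)
  have "0 \<le> p*x" "p*x \<le> p*1" using c pq by (auto intro: mult_left_mono)
  thus ?case using pq by (auto simp: S3_def)
next
  case (d x)
  have "0 \<le> q*x" "q*x \<le> q*1" using d pq by (auto intro: mult_left_mono)
  thus ?case using pq by (auto simp: S4_def)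
qed

lemma PP_inv: "PP p q = FF p q (PP p q)"
proof
  show "PP p q \<subseteq> FF p q (PP p q)"
  proof
    fix x assume "x \<in> PP p q"
    thus "x \<in> FF p q (PP p q)"
    proof cases
      case z
      have "S1 p 0 \<in> S1 p ` PP p q" using PP.z by blast
      thus ?thesis using z by (simp add: FF_def S1_def)
    qed (auto simp: FF_def)
  qed
next
  show "FF p q (PP p q) \<subseteq> PP p q" unfolding FF_def using PP.intros by blast
qed

lemma contS:
  "continuous_on UNIV (S1 p)" "continuous_on UNIV (S2 q)"
  "continuous_on UNIV (S3 p)" "continuous_on UNIV (S4 q)"
  unfolding S1_def S2_def S3_def S4_def by (intro continuous_intros)+

lemma img_closure:
  fixes f :: "real \<Rightarrow> real"
  assumes f: "continuous_on UNIV f" and P: "bounded P"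
  shows "f ` closure P = closure (f ` P)"
proof
  show "f ` closure P \<subseteq> closure (f ` P)"
    by (rule image_closure_subset) (auto intro: continuous_on_subset[OF f] closure_subset[THEN subsetD])
next
  have "compact (closure P)" using P by (simp add: compact_closure)
  hence "compact (f ` closure P)" using compact_continuous_image continuous_on_subset[OF f] by blast
  hence "closed (f ` closure P)" by (rule compact_imp_closed)
  moreover have "f ` P \<subseteq> f ` closure P" using closure_subset by blast
  ultimately show "closure (f ` P) \<subseteq> f ` closure P" by (rule closure_minimal[rotated])
qed

lemma exists_attr:
  fixes p q :: real
  assumes pq: "0 < p" "p < 1/2" "0 < q" "q < 1/2"
  shows "\<exists>K. K \<noteq> {} \<and> compact K \<and> K = S1 p ` K \<union> S2 q ` K \<union> S3 p ` K \<union> S4 q ` K"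
proof -
  define C where "C = closure (PP p q)"
  have sub: "PP p q \<subseteq> {0..1}" using PP_01[OF pq] by blast
  have bP: "bounded (PP p q)"
    by (rule bounded_subset[OF compact_imp_bounded[OF compact_Icc] sub])
  have 1: "C \<noteq> {}" using PP.z closure_subset[of "PP p q"] unfolding C_def by blast
  have 2: "compact C" using bP unfolding C_def by (simp add: compact_closure)
  have "C = closure (FF p q (PP p q))" unfolding C_def by (rule arg_cong[OF PP_inv])
  also have "\<dots> = closure (S1 p ` PP p q) \<union> closure (S2 q ` PP p q) \<union> closure (S3 p ` PP p q) \<union> closure (S4 q ` PP p q)"
    unfolding FF_def closure_Un by (rule refl)
  also have "\<dots> = S1 p ` C \<union> S2 q ` C \<union> S3 p ` C \<union> S4 q ` C"
    unfolding C_def using img_closure[OF contS(1) bP] img_closure[OF contS(2) bP]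
      img_closure[OF contS(3) bP] img_closure[OF contS(4) bP] by (simp only:)
  finally have 3: "C = S1 p ` C \<union> S2 q ` C \<union> S3 p ` C \<union> S4 q ` C" .
  show ?thesis by (rule exI[of _ C], intro conjI 1 2 3)
qed

lemma Kpq_props:
  fixes p q :: real
  assumes pq: "0 < p" "p < 1/2" "0 < q" "q < 1/2"
  shows "Kpq p q \<noteq> {}"
proof -
  have "\<exists>!K. K \<noteq> {} \<and> compact K \<and> K = S1 p ` K \<union> S2 q ` K \<union> S3 p ` K \<union> S4 q ` K"
  proof (rule ex_ex1I)
    show "\<exists>K. K \<noteq> {} \<and> compact K \<and> K = S1 p ` K \<union> S2 q ` K \<union> S3 p ` K \<union> S4 q ` K"
      by (rule exists_attr[OF pq])
  next
    fix K K' assume h1: "K \<noteq> {} \<and> compact K \<and> K = S1 p ` K \<union> S2 q ` K \<union> S3 p ` K \<union> S4 q ` K"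
      and h2: "K' \<noteq> {} \<and> compact K' \<and> K' = S1 p ` K' \<union> S2 q ` K' \<union> S3 p ` K' \<union> S4 q ` K'"
    have a: "K \<noteq> {}" "compact K" "K = FF p q K"
      using h1 unfolding FF_def by (rule conjunct1, rule conjunct2[THEN conjunct1], rule conjunct2[THEN conjunct2])
    have b: "K' \<noteq> {}" "compact K'" "K' = FF p q K'"
      using h2 unfolding FF_def by (rule conjunct1, rule conjunct2[THEN conjunct1], rule conjunct2[THEN conjunct2])
    show "K = K'" using sub_uniq[OF pq a b] sub_uniq[OF pq b a] by (rule subset_antisym)
  qed
  from theI'[OF this] show ?thesis unfolding Kpq_def by (rule conjunct1)
qed

lemma pow1: "(S1 p ^^ n) x = p^n * x"
  by (induction n) (auto simp: S1_def)

lemma pow2: "(S2 q ^^ n) x = q^n * x"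
  by (induction n) (auto simp: S2_def)

theorem proposition5:
  fixes p q :: real
  assumes "0 < p" "p < 1/2" "0 < q" "q < 1/2"
    and "twofold_cantor p q"
  shows "ln p / ln q \<notin> \<rat>"
proof
  assume "ln p / ln q \<in> \<rat>"
  then obtain a b :: int where ab: "b > 0" "ln p / ln q = of_int a / of_int b"
    by (rule Rats_cases')
  have lp: "ln p < 0" "ln q < 0" using assms by auto
  hence pos: "ln p / ln q > 0" by (simp add: divide_neg_neg)
  have "a > 0"
  proof (rule ccontr)
    assume "\<not> a > 0"
    hence "of_int a \<le> (0::real)" by simp
    hence "of_int a / of_int b \<le> (0::real)" using ab(1) by (simp add: divide_nonpos_pos)
    thus False using pos ab(2) by simp
  qed
  define a' where "a' = nat a"
  define b' where "b' = nat b"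
  have a'1: "real a' = of_int a" "a' > 0" using \<open>a > 0\<close> unfolding a'_def by auto
  have b'1: "real b' = of_int b" "b' > 0" using ab(1) unfolding b'_def by auto
  have "ln p / ln q = real a' / real b'" using ab(2) a'1 b'1 by simp
  hence "ln p * real b' = real a' * ln q" using lp b'1 by (simp add: field_simps)
  hence "ln (p^b') = ln (q^a')" using assms by (simp add: ln_realpow mult.commute)
  hence eq: "p^b' = q^a'" using assms by simp
  obtain k where k: "k \<in> Kpq p q" using Kpq_props[OF assms(1-4)] by blast
  define x where "x = S3 p k"
  have xA: "x \<in> Aset p q" using k unfolding Aset_def x_def by blast
  have "(S1 p ^^ b') x \<in> (S1 p ^^ b') ` Aset p q" using xA by (rule imageI)
  moreover have "(S2 q ^^ a') x \<in> (S2 q ^^ a') ` Aset p q" using xA by (rule imageI)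
  moreover have "(S1 p ^^ b') x = (S2 q ^^ a') x" unfolding pow1 pow2 eq by (rule refl)
  ultimately have "(S1 p ^^ b') ` Aset p q \<inter> (S2 q ^^ a') ` Aset p q \<noteq> {}" by auto
  moreover have "b' \<ge> 1" "a' \<ge> 1" using a'1 b'1 by auto
  ultimately show False using assms(5) unfolding twofold_cantor_def by blast
qed

end
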